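(* Let $X$, $Y_k$ ($k\in\mathbb N$) and norms $\|\cdot\|_{X\oplus Y_k}$ be as in the generalized $\ell^2$-sum setting. If $x^*\in X^*$ and $y_k^*\in Y_k^*$ ($k\in\mathbb N$) satisfy $\sup_k\|x^*+y_k^*\|_{X\oplus Y_k}<\infty$, and $0\le\alpha_k\le1$ ($k\in\mathbb N$) satisfy $\sum_k\alpha_k^2\le1$, then $$\Big\|x^*+\sum_k\alpha_ky_k^*\Big\|_\Sigma\le\sup_k\|x^*+y_k^*\|_{X\oplus Y_k}.$$
   Context: Setting: $(X,\|\cdot\|_X)$ and $(Y_k,\|\cdot\|_{Y_k})$, $k\in\mathbb N$, are Banach spaces; for each $k$, $\|\cdot\|_{X\oplus Y_k}$ is a norm on $X\oplus Y_k$ coinciding with $\|\cdot\|_X$ on $X$ and with $\|\cdot\|_{Y_k}$ on $Y_k$, and monotone: $\|x+y_k\|_{X\oplus Y_k}\ge\|x\|_X$. Duals of direct sums are identified with direct sums of duals via $(x^*+y^* )(x+y)=x^*(x)+y^*(y)$. $\Lambda(X\oplus Y_k)$ is the set of functionals $x^*+\sum_k\alpha_ky_k^*$ (acting by $x+\sum y_k\mapsto x^*(x)+\sum\alpha_ky_k^*(y_k)$) with $x^*\in X^*$, $y_k^*\in Y_k^*$, $\|x^*+y_k^*\|_{X\oplus Y_k}\le1$ for all $k$, $0\le\alpha_k\le1$, $\sum\alpha_k^2\le1$. $\Sigma(X\oplus Y_k)=\{x+y_1+y_2+\dots:x\in X,y_k\in Y_k,\sum\|y_k\|_{Y_k}^2<\infty\}$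 with $\|z\|_\Sigma=\sup\{|z^*(z)|:z^*\in\Lambda(X\oplus Y_k)\}$; the dual norm is also denoted $\|\cdot\|_\Sigma$. *)

theory Defs
  imports "HOL-Analysis.Analysis"
begin

text \<open>X is the whole type 'a. Each Y_k is a closed linear
subspace of an ambient real Banach type 'b with the inherited norm.
An element x + y of X \<oplus> Y_k is the pair (x, y) with y \<in> Y_k, and the
norm on X \<oplus> Y_k is given by N :: 'a \<Rightarrow> 'b \<Rightarrow> real.\<close>

definition sum_norm :: "'b::real_normed_vector set \<Rightarrow> ('a::real_normed_vector \<Rightarrow> 'b \<Rightarrow> real) \<Rightarrow> bool" where
  "sum_norm Y N \<longleftrightarrow>
     (\<forall>x. \<forall>y\<in>Y. 0 \<le> N x y) \<and>
     (\<forall>x. \<forall>y\<in>Y. N x y = 0 \<longrightarrow> x = 0 \<and> y = 0) \<and>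
     (\<forall>c x. \<forall>y\<in>Y. N (c *\<^sub>R x) (c *\<^sub>R y) = \<bar>c\<bar> * N x y) \<and>
     (\<forall>x x'. \<forall>y\<in>Y. \<forall>y'\<in>Y. N (x + x') (y + y') \<le> N x y + N x' y') \<and>
     (\<forall>x. N x 0 = norm x) \<and>
     (\<forall>y\<in>Y. N 0 y = norm y) \<and>
     (\<forall>x. \<forall>y\<in>Y. norm x \<le> N x y)"

definition lin_func_on :: "'b::real_normed_vector set \<Rightarrow> ('b \<Rightarrow> real) \<Rightarrow> bool" where
  "lin_func_on Y f \<longleftrightarrow>
     (\<forall>u\<in>Y. \<forall>v\<in>Y. f (u + v) = f u + f v) \<and>
     (\<forall>c. \<forall>u\<in>Y. f (c *\<^sub>R u) = c * f u) \<and>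
     (\<exists>K. \<forall>u\<in>Y. \<bar>f u\<bar> \<le> K * norm u)"

definition dual_sum_norm ::
  "'b::real_normed_vector set \<Rightarrow> ('a::real_normed_vector \<Rightarrow> 'b \<Rightarrow> real) \<Rightarrow> ('a \<Rightarrow> real) \<Rightarrow> ('b \<Rightarrow> real) \<Rightarrow> real" where
  "dual_sum_norm Y N xs ys = Sup {\<bar>xs x + ys y\<bar> | x y. y \<in> Y \<and> N x y \<le> 1}"

text \<open>Action of x^* + \<Sum> \<alpha>_k y_k^* on x + y_1 + y_2 + ...\<close>
definition act :: "('a \<Rightarrow> real) \<Rightarrow> (nat \<Rightarrow> 'b \<Rightarrow> real) \<Rightarrow> (nat \<Rightarrow> real) \<Rightarrow> 'a \<times> (nat \<Rightarrow> 'b) \<Rightarrow> real" where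
  "act xs ys \<alpha> z = xs (fst z) + (\<Sum>k. \<alpha> k * ys k (snd z k))"

definition LambdaSet ::
  "(nat \<Rightarrow> 'b::real_normed_vector set) \<Rightarrow> (nat \<Rightarrow> 'a::real_normed_vector \<Rightarrow> 'b \<Rightarrow> real)
     \<Rightarrow> (('a \<Rightarrow> real) \<times> (nat \<Rightarrow> 'b \<Rightarrow> real) \<times> (nat \<Rightarrow> real)) set" where
  "LambdaSet Y N = {(xs, ys, \<alpha>). bounded_linear xs \<and> (\<forall>k. lin_func_on (Y k) (ys k)) \<and>
       (\<forall>k. dual_sum_norm (Y k) (N k) xs (ys k) \<le> 1) \<and>
       (\<forall>k. 0 \<le> \<alpha> k \<and> \<alpha> k \<le> 1) \<and> summable (\<lambda>k. (\<alpha> k)\<^sup>2) \<and> (\<Sum>k. (\<alpha> k)\<^sup>2) \<le> 1}"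

definition SigmaSet :: "(nat \<Rightarrow> 'b::real_normed_vector set) \<Rightarrow> ('a \<times> (nat \<Rightarrow> 'b)) set" where
  "SigmaSet Y = {(x, y). (\<forall>k. y k \<in> Y k) \<and> summable (\<lambda>k. (norm (y k))\<^sup>2)}"

definition sigma_norm ::
  "(nat \<Rightarrow> 'b::real_normed_vector set) \<Rightarrow> (nat \<Rightarrow> 'a::real_normed_vector \<Rightarrow> 'b \<Rightarrow> real)
     \<Rightarrow> 'a \<times> (nat \<Rightarrow> 'b) \<Rightarrow> real" where
  "sigma_norm Y N z = Sup {\<bar>act xs ys \<alpha> z\<bar> | xs ys \<alpha>. (xs, ys, \<alpha>) \<in> LambdaSet Y N}"

definition sigma_dual_norm ::
  "(nat \<Rightarrow> 'b::real_normed_vector set) \<Rightarrow> (nat \<Rightarrow> 'a::real_normed_vector \<Rightarrow> 'b \<Rightarrow> real)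
     \<Rightarrow> ('a \<times> (nat \<Rightarrow> 'b) \<Rightarrow> real) \<Rightarrow> real" where
  "sigma_dual_norm Y N f = Sup {\<bar>f z\<bar> | z. z \<in> SigmaSet Y \<and> sigma_norm Y N z \<le> 1}"

end

theory Submission
  imports Defs
begin

lemma lf_zero:
  assumes "lin_func_on Y f" "subspace Y"
  shows "f 0 = 0"
proof -
  have "0 \<in> Y" using assms(2) subspace_0 by blast
  then have "f (0 *\<^sub>R 0) = 0 * f 0" using assms(1) unfolding lin_func_on_def by blast
  then show ?thesis by simp
qed

lemma lf_scale:
  assumes "lin_func_on Y f" "u \<in> Y"
  shows "f (c *\<^sub>R u) = c * f u"
  using assms unfolding lin_func_on_def by blast

lemma sn_nonneg: "sum_norm Y N \<Longrightarrow> y \<in> Y \<Longrightarrow> 0 \<le> N x y" by (simp add: sum_norm_def)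
lemma sn_zero: "sum_norm Y N \<Longrightarrow> y \<in> Y \<Longrightarrow> N x y = 0 \<Longrightarrow> x = 0 \<and> y = 0" by (simp add: sum_norm_def)
lemma sn_scale: "sum_norm Y N \<Longrightarrow> y \<in> Y \<Longrightarrow> N (c *\<^sub>R x) (c *\<^sub>R y) = \<bar>c\<bar> * N x y" by (simp add: sum_norm_def)
lemma sn_tri: "sum_norm Y N \<Longrightarrow> y \<in> Y \<Longrightarrow> y' \<in> Y \<Longrightarrow> N (x + x') (y + y') \<le> N x y + N x' y'" by (simp add: sum_norm_def)
lemma sn_x0: "sum_norm Y N \<Longrightarrow> N x 0 = norm x" by (simp add: sum_norm_def)
lemma sn_0y: "sum_norm Y N \<Longrightarrow> y \<in> Y \<Longrightarrow> N 0 y = norm y" by (simp add: sum_norm_def)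
lemma sn_ge: "sum_norm Y N \<Longrightarrow> y \<in> Y \<Longrightarrow> norm x \<le> N x y" by (simp add: sum_norm_def)

lemma dsn_bdd:
  assumes N: "sum_norm Y N" and Y: "subspace Y" and xs: "bounded_linear xs"
    and ys: "lin_func_on Y ys"
  shows "bdd_above {\<bar>xs x + ys y\<bar> | x y. y \<in> Y \<and> N x y \<le> 1}"
proof -
  obtain Kx where Kx: "\<And>x. norm (xs x) \<le> norm x * Kx"
    using bounded_linear.bounded[OF xs] by blast
  obtain K where K: "\<forall>u\<in>Y. \<bar>ys u\<bar> \<le> K * norm u"
    using ys unfolding lin_func_on_def by blast
  have "\<bar>xs x + ys u\<bar> \<le> \<bar>Kx\<bar> + 2 * \<bar>K\<bar>" if u: "u \<in> Y" and le: "N x u \<le> 1" for x u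
  proof -
    have nx: "norm x \<le> 1" using sn_ge[OF N u, of x] le by linarith
    have z: "0 \<in> Y" using Y subspace_0 by blast
    have "N (x + - x) (u + 0) \<le> N x u + N (- x) 0"
      using sn_tri[OF N u z] .
    moreover have "N (x + - x) (u + 0) = norm u" using sn_0y[OF N u] by simp
    moreover have "N (- x) 0 = norm x" using sn_x0[OF N, of "-x"] by simp
    ultimately have nu: "norm u \<le> 2" using le nx by linarith
    have "\<bar>xs x\<bar> \<le> norm x * Kx" using Kx[of x] by simp
    also have "\<dots> \<le> norm x * \<bar>Kx\<bar>" by (simp add: mult_left_mono)
    also have "\<dots> \<le> 1 * \<bar>Kx\<bar>" using nx by (intro mult_right_mono) auto
    finally have a: "\<bar>xs x\<bar> \<le> \<bar>Kx\<bar>" by simp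
    have "\<bar>ys u\<bar> \<le> K * norm u" using K u by blast
    also have "\<dots> \<le> \<bar>K\<bar> * norm u" by (simp add: mult_right_mono)
    also have "\<dots> \<le> \<bar>K\<bar> * 2" using nu by (simp add: mult_left_mono)
    finally show ?thesis using a by linarith
  qed
  then show ?thesis unfolding bdd_above_def by blast
qed

lemma dsn_nonneg:
  assumes N: "sum_norm Y N" and Y: "subspace Y" and xs: "bounded_linear xs"
    and ys: "lin_func_on Y ys"
  shows "0 \<le> dual_sum_norm Y N xs ys"
proof -
  have z: "0 \<in> Y" using Y subspace_0 by blast
  have "N 0 0 = 0" using sn_x0[OF N, of 0] by simp
  then have "\<bar>xs 0 + ys 0\<bar> \<in> {\<bar>xs x + ys y\<bar> | x y. y \<in> Y \<and> N x y \<le> 1}"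
    using z by fastforce
  then have "\<bar>xs 0 + ys 0\<bar> \<le> dual_sum_norm Y N xs ys"
    unfolding dual_sum_norm_def by (rule cSup_upper[OF _ dsn_bdd[OF N Y xs ys]])
  then show ?thesis by linarith
qed

lemma dsn_bound:
  assumes N: "sum_norm Y N" and Y: "subspace Y" and xs: "bounded_linear xs"
    and ys: "lin_func_on Y ys" and u: "u \<in> Y"
  shows "\<bar>xs x + ys u\<bar> \<le> dual_sum_norm Y N xs ys * N x u"
proof (cases "N x u = 0")
  case True
  then have "x = 0 \<and> u = 0" using sn_zero[OF N u] by blast
  moreover have "N 0 0 = 0" using sn_x0[OF N, of 0] by simp
  moreover have "ys 0 = 0" using lf_zero[OF ys Y] .
  moreover have "xs 0 = 0" using linear_simps(3)[OF xs] .
  ultimately show ?thesis by simp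
next
  case False
  have "0 \<le> N x u" using sn_nonneg[OF N u] .
  then have pos: "N x u > 0" using False by linarith
  define t where "t = 1 / N x u"
  have t: "t > 0" using pos t_def by simp
  have tu: "t *\<^sub>R u \<in> Y" using Y u by (simp add: subspace_scale)
  have "N (t *\<^sub>R x) (t *\<^sub>R u) = \<bar>t\<bar> * N x u" using sn_scale[OF N u] .
  then have N1: "N (t *\<^sub>R x) (t *\<^sub>R u) = 1" using t pos t_def by simp
  have "\<bar>xs (t *\<^sub>R x) + ys (t *\<^sub>R u)\<bar> \<in> {\<bar>xs x + ys y\<bar> | x y. y \<in> Y \<and> N x y \<le> 1}"
    using tu N1 by fastforce
  then have "\<bar>xs (t *\<^sub>R x) + ys (t *\<^sub>R u)\<bar> \<le> dual_sum_norm Y N xs ys"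
    unfolding dual_sum_norm_def by (rule cSup_upper[OF _ dsn_bdd[OF N Y xs ys]])
  moreover have "xs (t *\<^sub>R x) + ys (t *\<^sub>R u) = t * (xs x + ys u)"
    using linear_simps(5)[OF xs] lf_scale[OF ys u] by (simp add: algebra_simps)
  ultimately have "t * \<bar>xs x + ys u\<bar> \<le> dual_sum_norm Y N xs ys" using t by (simp add: abs_mult)
  then have "N x u * (t * \<bar>xs x + ys u\<bar>) \<le> N x u * dual_sum_norm Y N xs ys"
    using pos by (simp add: mult_left_mono)
  moreover have "N x u * (t * \<bar>xs x + ys u\<bar>) = \<bar>xs x + ys u\<bar>" using pos t_def by simp
  ultimately show ?thesis by (simp add: mult.commute)
qed


lemma act_bound:
  fixes Y :: "nat \<Rightarrow> 'b::real_normed_vector set"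
    and N :: "nat \<Rightarrow> 'a::real_normed_vector \<Rightarrow> 'b \<Rightarrow> real"
  assumes Ysub: "\<forall>k. subspace (Y k)"
    and Nnorm: "\<forall>k. sum_norm (Y k) (N k)"
    and L: "(xs', ys', a) \<in> LambdaSet Y N"
    and z: "(x, y) \<in> SigmaSet Y"
  shows "summable (\<lambda>k. \<bar>a k * ys' k (y k)\<bar>)"
    and "\<bar>act xs' ys' a (x, y)\<bar> \<le> norm x + (1 + (\<Sum>k. (norm (y k))\<^sup>2)) / 2"
proof -
  have bl: "bounded_linear xs'" and lf: "\<And>k. lin_func_on (Y k) (ys' k)"
    and D: "\<And>k. dual_sum_norm (Y k) (N k) xs' (ys' k) \<le> 1"
    and a01: "\<And>k. 0 \<le> a k \<and> a k \<le> 1" and as: "summable (\<lambda>k. (a k)\<^sup>2)"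
    and as1: "(\<Sum>k. (a k)\<^sup>2) \<le> 1"
    using L unfolding LambdaSet_def by auto
  have yk: "\<And>k. y k \<in> Y k" and ys2: "summable (\<lambda>k. (norm (y k))\<^sup>2)"
    using z unfolding SigmaSet_def by auto
  have hy: "\<bar>ys' k (y k)\<bar> \<le> norm (y k)" for k
  proof -
    have "\<bar>xs' 0 + ys' k (y k)\<bar> \<le> dual_sum_norm (Y k) (N k) xs' (ys' k) * N k 0 (y k)"
      using dsn_bound[OF spec[OF Nnorm, of k] spec[OF Ysub, of k] bl lf yk] .
    also have "\<dots> = dual_sum_norm (Y k) (N k) xs' (ys' k) * norm (y k)"
      using sn_0y[OF spec[OF Nnorm, of k] yk] by simp
    also have "\<dots> \<le> 1 * norm (y k)" using D[of k] by (intro mult_right_mono) auto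
    finally show ?thesis using linear_simps(3)[OF bl] by simp
  qed
  have hb: "\<bar>a k * ys' k (y k)\<bar> \<le> ((a k)\<^sup>2 + (norm (y k))\<^sup>2) / 2" for k
  proof -
    have "\<bar>a k * ys' k (y k)\<bar> = a k * \<bar>ys' k (y k)\<bar>" using a01[of k] by (simp add: abs_mult)
    also have "\<dots> \<le> a k * norm (y k)" using a01[of k] hy[of k] by (simp add: mult_left_mono)
    also have "\<dots> \<le> ((a k)\<^sup>2 + (norm (y k))\<^sup>2) / 2"
      using sum_squares_ge_zero[of "a k - norm (y k)" 0]
      by (simp add: power2_eq_square algebra_simps)
    finally show ?thesis .
  qed
  have gs: "summable (\<lambda>k. ((a k)\<^sup>2 + (norm (y k))\<^sup>2) / 2)"
    by (intro summable_divide summable_add as ys2)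
  show sab: "summable (\<lambda>k. \<bar>a k * ys' k (y k)\<bar>)"
    by (rule summable_comparison_test'[OF gs]) (use hb in simp)
  have "\<bar>\<Sum>k. a k * ys' k (y k)\<bar> \<le> (\<Sum>k. \<bar>a k * ys' k (y k)\<bar>)"
    by (rule summable_rabs[OF sab])
  also have "\<dots> \<le> (\<Sum>k. ((a k)\<^sup>2 + (norm (y k))\<^sup>2) / 2)"
    by (rule suminf_le[OF hb sab gs])
  also have "\<dots> = ((\<Sum>k. (a k)\<^sup>2) + (\<Sum>k. (norm (y k))\<^sup>2)) / 2"
    using suminf_divide[OF summable_add[OF as ys2], of 2] suminf_add[OF as ys2] by simp
  also have "\<dots> \<le> (1 + (\<Sum>k. (norm (y k))\<^sup>2)) / 2" using as1 by simp
  finally have s1: "\<bar>\<Sum>k. a k * ys' k (y k)\<bar> \<le> (1 + (\<Sum>k. (norm (y k))\<^sup>2)) / 2" .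
  have z0: "0 \<in> Y 0" using Ysub subspace_0 by blast
  have "\<bar>xs' x + ys' 0 0\<bar> \<le> dual_sum_norm (Y 0) (N 0) xs' (ys' 0) * N 0 x 0"
    using dsn_bound[OF spec[OF Nnorm, of 0] spec[OF Ysub, of 0] bl lf z0] .
  also have "\<dots> = dual_sum_norm (Y 0) (N 0) xs' (ys' 0) * norm x"
    using sn_x0[OF spec[OF Nnorm, of 0]] by simp
  also have "\<dots> \<le> 1 * norm x" using D[of 0] by (intro mult_right_mono) auto
  finally have s2: "\<bar>xs' x\<bar> \<le> norm x" using lf_zero[OF lf spec[OF Ysub, of 0]] by simp
  show "\<bar>act xs' ys' a (x, y)\<bar> \<le> norm x + (1 + (\<Sum>k. (norm (y k))\<^sup>2)) / 2"
    unfolding act_def using s1 s2 abs_triangle_ineq[of "xs' x" "\<Sum>k. a k * ys' k (y k)"] by (simp only: fst_conv snd_conv)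
qed


theorem lemma3p3:
  fixes Y :: "nat \<Rightarrow> 'b::banach set"
    and N :: "nat \<Rightarrow> 'a::banach \<Rightarrow> 'b \<Rightarrow> real"
    and xs :: "'a \<Rightarrow> real"
    and ys :: "nat \<Rightarrow> 'b \<Rightarrow> real"
    and \<alpha> :: "nat \<Rightarrow> real"
  assumes Ysub: "\<forall>k. subspace (Y k) \<and> closed (Y k)"
    and Nnorm: "\<forall>k. sum_norm (Y k) (N k)"
    and xs: "bounded_linear xs"
    and ys: "\<forall>k. lin_func_on (Y k) (ys k)"
    and bdd: "bdd_above (range (\<lambda>k. dual_sum_norm (Y k) (N k) xs (ys k)))"
    and \<alpha>: "\<forall>k. 0 \<le> \<alpha> k \<and> \<alpha> k \<le> 1"
    and \<alpha>sum: "summable (\<lambda>k. (\<alpha> k)\<^sup>2)" "(\<Sum>k. (\<alpha> k)\<^sup>2) \<le> 1"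
  shows "sigma_dual_norm Y N (act xs ys \<alpha>)
           \<le> (SUP k. dual_sum_norm (Y k) (N k) xs (ys k))"
proof -
  define M where "M = (SUP k. dual_sum_norm (Y k) (N k) xs (ys k))"
  have Ys: "\<forall>k. subspace (Y k)" using Ysub by blast
  have Nk: "\<And>k. sum_norm (Y k) (N k)" using Nnorm by blast
  have Yk: "\<And>k. subspace (Y k)" using Ysub by blast
  have lfk: "\<And>k. lin_func_on (Y k) (ys k)" using ys by blast
  have DM: "\<And>k. dual_sum_norm (Y k) (N k) xs (ys k) \<le> M"
    unfolding M_def by (rule cSUP_upper[OF UNIV_I bdd])
  have M0: "0 \<le> M" using dsn_nonneg[OF Nk Yk xs lfk, of 0] DM[of 0] by linarith
  have key: "\<bar>act xs ys \<alpha> z\<bar> \<le> M" if zS: "z \<in> SigmaSet Y" and zn: "sigma_norm Y N z \<le> 1" for z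
  proof (rule dense_ge)
    fix c assume cM: "M < c"
    then have c: "c > 0" using M0 by linarith
    obtain x y where zxy: "z = (x, y)" by (cases z)
    define xs' where "xs' = (\<lambda>v. xs v / c)"
    define ys' where "ys' = (\<lambda>k v. ys k v / c)"
    have bl': "bounded_linear xs'" unfolding xs'_def
      using bounded_linear_compose[OF bounded_linear_divide xs] by (simp add: o_def)
    have lf': "lin_func_on (Y k) (ys' k)" for k
    proof -
      obtain K where K: "\<forall>u\<in>Y k. \<bar>ys k u\<bar> \<le> K * norm u"
        using lfk[of k] unfolding lin_func_on_def by blast
      have "\<forall>u\<in>Y k. \<bar>ys' k u\<bar> \<le> (K / c) * norm u"
      proof
        fix u assume "u \<in> Y k"
        then have "\<bar>ys k u\<bar> / c \<le> K * norm u / c" using K c by (simp add: divide_right_mono)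
        then show "\<bar>ys' k u\<bar> \<le> (K / c) * norm u" unfolding ys'_def using c by simp
      qed
      moreover have "\<forall>u\<in>Y k. \<forall>v\<in>Y k. ys' k (u + v) = ys' k u + ys' k v"
        using lfk[of k] unfolding lin_func_on_def ys'_def by (simp add: add_divide_distrib)
      moreover have "\<forall>c'. \<forall>u\<in>Y k. ys' k (c' *\<^sub>R u) = c' * ys' k u"
        using lfk[of k] unfolding lin_func_on_def ys'_def by simp
      ultimately show ?thesis unfolding lin_func_on_def by blast
    qed
    have D': "dual_sum_norm (Y k) (N k) xs' (ys' k) \<le> 1" for k
      unfolding dual_sum_norm_def
    proof (rule cSup_least)
      have "0 \<in> Y k" using Yk subspace_0 by blast
      moreover have "N k 0 0 = 0" using sn_x0[OF Nk, of k 0] by simp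
      ultimately show "{\<bar>xs' x + ys' k y\<bar> | x y. y \<in> Y k \<and> N k x y \<le> 1} \<noteq> {}"
        by (auto intro!: exI[of _ 0])
    next
      fix r assume "r \<in> {\<bar>xs' x + ys' k y\<bar> | x y. y \<in> Y k \<and> N k x y \<le> 1}"
      then obtain v w where r: "r = \<bar>xs' v + ys' k w\<bar>" and w: "w \<in> Y k" and vw: "N k v w \<le> 1"
        by blast
      have "\<bar>xs v + ys k w\<bar> \<in> {\<bar>xs x + ys k y\<bar> | x y. y \<in> Y k \<and> N k x y \<le> 1}"
        using w vw by blast
      then have "\<bar>xs v + ys k w\<bar> \<le> dual_sum_norm (Y k) (N k) xs (ys k)"
        unfolding dual_sum_norm_def by (rule cSup_upper[OF _ dsn_bdd[OF Nk Yk xs lfk]])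
      then have "\<bar>xs v + ys k w\<bar> \<le> c" using DM[of k] cM by linarith
      moreover have "r = \<bar>xs v + ys k w\<bar> / c" unfolding r xs'_def ys'_def using c
        by (simp add: add_divide_distrib[symmetric])
      ultimately show "r \<le> 1" using c by simp
    qed
    have L': "(xs', ys', \<alpha>) \<in> LambdaSet Y N"
      unfolding LambdaSet_def using bl' lf' D' \<alpha> \<alpha>sum by blast
    have zS': "(x, y) \<in> SigmaSet Y" using zS zxy by simp
    have sab: "summable (\<lambda>k. \<bar>\<alpha> k * ys' k (y k)\<bar>)"
      using act_bound(1)[OF Ys Nnorm L' zS'] .
    have bddS: "bdd_above {\<bar>act xs'' ys'' a z\<bar> | xs'' ys'' a. (xs'', ys'', a) \<in> LambdaSet Y N}"
      unfolding bdd_above_def zxy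
      using act_bound(2)[OF Ys Nnorm _ zS'] by blast
    have "\<bar>act xs' ys' \<alpha> z\<bar> \<le> sigma_norm Y N z"
      unfolding sigma_norm_def by (rule cSup_upper[OF _ bddS]) (use L' in blast)
    then have le1: "\<bar>act xs' ys' \<alpha> z\<bar> \<le> 1" using zn by linarith
    have s1: "summable (\<lambda>k. \<alpha> k * ys' k (y k))" using summable_rabs_cancel[OF sab] .
    have s2: "summable (\<lambda>k. \<alpha> k * ys k (y k))"
      using summable_mult[OF s1, of c] c unfolding ys'_def by simp
    have "(\<Sum>k. \<alpha> k * ys' k (y k)) = (\<Sum>k. \<alpha> k * ys k (y k) / c)"
      unfolding ys'_def by simp
    also have "\<dots> = (\<Sum>k. \<alpha> k * ys k (y k)) / c" by (rule suminf_divide[OF s2])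
    finally have "act xs' ys' \<alpha> z = act xs ys \<alpha> z / c"
      unfolding act_def zxy xs'_def by (simp add: add_divide_distrib)
    then have "\<bar>act xs ys \<alpha> z\<bar> / c \<le> 1" using le1 c by simp
    then show "\<bar>act xs ys \<alpha> z\<bar> \<le> c" using c by simp
  qed
  have z0: "sigma_norm Y N (0, \<lambda>_. 0) \<le> 1"
    unfolding sigma_norm_def
  proof (rule cSup_least)
    have "dual_sum_norm (Y k) (N k) (\<lambda>_. 0) (\<lambda>_. 0) \<le> 1" for k
      unfolding dual_sum_norm_def
    proof (rule cSup_least)
      have "0 \<in> Y k" using Yk subspace_0 by blast
      moreover have "N k 0 0 = 0" using sn_x0[OF Nk, of k 0] by simp
      ultimately show "{\<bar>(\<lambda>_. 0::real) x + (\<lambda>_. 0::real) y\<bar> | x y. y \<in> Y k \<and> N k x y \<le> 1} \<noteq> {}"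
        by (auto intro!: exI[of _ 0])
    qed auto
    moreover have "lin_func_on (Y k) (\<lambda>_. 0)" for k unfolding lin_func_on_def by (auto intro!: exI[of _ 0])
    ultimately have "((\<lambda>_. 0), (\<lambda>_ _. 0), (\<lambda>_. 0)) \<in> LambdaSet Y N"
      unfolding LambdaSet_def by (auto simp: bounded_linear_zero)
    then show "{\<bar>act xs' ys' a (0, \<lambda>_. 0)\<bar> | xs' ys' a. (xs', ys', a) \<in> LambdaSet Y N} \<noteq> {}"
      by blast
  next
    fix r assume "r \<in> {\<bar>act xs' ys' a (0, \<lambda>_. 0)\<bar> | xs' ys' a. (xs', ys', a) \<in> LambdaSet Y N}"
    then obtain xs' ys' a where r: "r = \<bar>act xs' ys' a (0, \<lambda>_. 0)\<bar>"
      and L: "(xs', ys', a) \<in> LambdaSet Y N" by blast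
    have "bounded_linear xs'" "\<And>k. lin_func_on (Y k) (ys' k)"
      using L unfolding LambdaSet_def by auto
    then have "xs' 0 = 0" "\<And>k. ys' k 0 = 0"
      using linear_simps(3) lf_zero Yk by blast+
    then show "r \<le> 1" unfolding r act_def by simp
  qed
  have zS0: "(0, \<lambda>_. 0) \<in> SigmaSet Y"
    unfolding SigmaSet_def using Yk subspace_0 by auto
  show ?thesis
    unfolding sigma_dual_norm_def M_def[symmetric]
  proof (rule cSup_least)
    show "{\<bar>act xs ys \<alpha> z\<bar> | z. z \<in> SigmaSet Y \<and> sigma_norm Y N z \<le> 1} \<noteq> {}"
      using zS0 z0 by blast
  next
    fix r assume "r \<in> {\<bar>act xs ys \<alpha> z\<bar> | z. z \<in> SigmaSet Y \<and> sigma_norm Y N z \<le> 1}"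
    then show "r \<le> M" using key by blast
  qed
qed

end
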